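(* Let $G$ be a finite group of order $v$ and suppose $\gcd(sk,v-1)=1$. Then (i) if $S'$ is a $(v,s,k,\lambda_1,\mu_1)$-DPDF in $G$, then $\mu_1=0$ or $\mu_1=sk$; (ii) if $S'$ is a $(v,s,k,\lambda_2,\mu_2)$-EPDF in $G$, then $\mu_2=0$ or $\mu_2=sk$.
   Context: Groups are written multiplicatively with identity $e$; $G^*=G\setminus\{e\}$. For $D\subseteq G$, $\Delta(D)$ is the multiset $\{xy^{-1}: x,y\in D, x\ne y\}$; for $D_1,D_2\subseteq G$, $\Delta(D_1,D_2)$ is the multiset $\{xy^{-1}:x\in D_1,y\in D_2\}$. For a family $A=\{A_1,\dots,A_s\}$ of pairwise disjoint subsets, ${\rm Int}(A)=\bigcup_i\Delta(A_i)$ and ${\rm Ext}(A)=\bigcup_{i\ne j}\Delta(A_i,A_j)$ (multiset unions). For $|G|=v$, a $(v,s,k,\lambda,\mu)$-DPDF is a family of $s$ pairwise disjoint $k$-subsets of $G^*$ with union $S$ such that ${\rm Int}(A)$ contains each element of $S$ exactly $\lambda$ times and each element of $G\setminus(S\cup\{e\})$ exactly $\mu$ times; a $(v,s,k,\lambda,\mu)$-EPDF is defined the same way using ${\rm Ext}(A)$. *)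

theory Defs
  imports "HOL-Algebra.Coset"
begin

definition pdf_family :: "('a, 'b) monoid_scheme \<Rightarrow> nat \<Rightarrow> nat \<Rightarrow> (nat \<Rightarrow> 'a set) \<Rightarrow> bool" where
  "pdf_family G s k A \<longleftrightarrow>
     (\<forall>i<s. A i \<subseteq> carrier G - {\<one>\<^bsub>G\<^esub>} \<and> finite (A i) \<and> card (A i) = k) \<and>
     (\<forall>i<s. \<forall>j<s. i \<noteq> j \<longrightarrow> A i \<inter> A j = {})"

definition pdf_union :: "nat \<Rightarrow> (nat \<Rightarrow> 'a set) \<Rightarrow> 'a set" where
  "pdf_union s A = (\<Union>i<s. A i)"

text \<open>Multiplicity of g in Int(A) = union of Delta(A_i).\<close>
definition int_mult :: "('a, 'b) monoid_scheme \<Rightarrow> nat \<Rightarrow> (nat \<Rightarrow> 'a set) \<Rightarrow> 'a \<Rightarrow> nat" where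
  "int_mult G s A g = card {(i, x, y). i < s \<and> x \<in> A i \<and> y \<in> A i \<and> x \<noteq> y \<and>
                                     x \<otimes>\<^bsub>G\<^esub> inv\<^bsub>G\<^esub> y = g}"

text \<open>Multiplicity of g in Ext(A) = union over i /= j of Delta(A_i, A_j).\<close>
definition ext_mult :: "('a, 'b) monoid_scheme \<Rightarrow> nat \<Rightarrow> (nat \<Rightarrow> 'a set) \<Rightarrow> 'a \<Rightarrow> nat" where
  "ext_mult G s A g = card {(i, j, x, y). i < s \<and> j < s \<and> i \<noteq> j \<and> x \<in> A i \<and> y \<in> A j \<and>
                                        x \<otimes>\<^bsub>G\<^esub> inv\<^bsub>G\<^esub> y = g}"

definition DPDF :: "('a, 'b) monoid_scheme \<Rightarrow> nat \<Rightarrow> nat \<Rightarrow> nat \<Rightarrow> nat \<Rightarrow> nat \<Rightarrow> (nat \<Rightarrow> 'a set) \<Rightarrow> bool" where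
  "DPDF G v s k lam mu A \<longleftrightarrow> order G = v \<and> pdf_family G s k A \<and>
     (\<forall>g \<in> pdf_union s A. int_mult G s A g = lam) \<and>
     (\<forall>g \<in> carrier G - (pdf_union s A \<union> {\<one>\<^bsub>G\<^esub>}). int_mult G s A g = mu)"

definition EPDF :: "('a, 'b) monoid_scheme \<Rightarrow> nat \<Rightarrow> nat \<Rightarrow> nat \<Rightarrow> nat \<Rightarrow> nat \<Rightarrow> (nat \<Rightarrow> 'a set) \<Rightarrow> bool" where
  "EPDF G v s k lam mu A \<longleftrightarrow> order G = v \<and> pdf_family G s k A \<and>
     (\<forall>g \<in> pdf_union s A. ext_mult G s A g = lam) \<and>
     (\<forall>g \<in> carrier G - (pdf_union s A \<union> {\<one>\<^bsub>G\<^esub>}). ext_mult G s A g = mu)"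

end

theory Submission imports Defs begin

lemma key:
  fixes G (structure) and T :: "'t set"
  assumes grp: "group G" and fin: "finite (carrier G)" and finT: "finite T"
    and Ssub: "S \<subseteq> carrier G - {\<one>}"
    and hx: "\<forall>t\<in>T. fx t \<in> carrier G" and hy: "\<forall>t\<in>T. fy t \<in> S"
    and hne: "\<forall>t\<in>T. fx t \<noteq> fy t"
    and inj: "inj_on (\<lambda>t. (fx t, fy t)) T"
    and dv: "card S dvd card T"
    and lam: "\<forall>g\<in>S. card {t\<in>T. fx t \<otimes> inv (fy t) = g} = lam"
    and mu: "\<forall>g\<in>carrier G - (S \<union> {\<one>}). card {t\<in>T. fx t \<otimes> inv (fy t) = g} = mu"
    and ne: "carrier G - (S \<union> {\<one>}) \<noteq> {}"
    and gc: "gcd (card S) (order G - 1) = 1"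
  shows "mu = 0 \<or> mu = card S"
proof -
  interpret group G by (rule grp)
  define R where "R = carrier G - (S \<union> {\<one>})"
  define h where "h t = fx t \<otimes> inv (fy t)" for t
  have finS: "finite S" using Ssub fin finite_subset by blast
  have finR: "finite R" unfolding R_def using fin by simp
  obtain g0 where g0: "g0 \<in> R" using ne R_def by blast
  have "card {t\<in>T. h t = g0} \<le> card S"
  proof (rule card_inj_on_le[where f = fy])
    show "inj_on fy {t \<in> T. h t = g0}"
    proof (rule inj_onI)
      fix a b assume a: "a \<in> {t \<in> T. h t = g0}" and b: "b \<in> {t \<in> T. h t = g0}" and e: "fy a = fy b"
      have ya: "fy a \<in> carrier G" using a hy Ssub by blast
      have yb: "fy b \<in> carrier G" using b hy Ssub by blast
      have gc0: "g0 \<in> carrier G" using g0 R_def by blast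
      have "fx a = g0 \<otimes> fy a" using a hx ya gc0 inv_solve_right[of g0 "fx a" "fy a"] unfolding h_def
        by auto
      moreover have "fx b = g0 \<otimes> fy b" using b hx yb gc0 inv_solve_right[of g0 "fx b" "fy b"] unfolding h_def
        by auto
      ultimately show "a = b" using e inj a b unfolding inj_on_def by auto
    qed
  qed (use hy finS in auto)
  hence mule: "mu \<le> card S" using mu g0 unfolding R_def h_def by auto
  have himg: "h ` T \<subseteq> carrier G - {\<one>}"
  proof
    fix g assume "g \<in> h ` T"
    then obtain t where t: "t \<in> T" "g = h t" by blast
    have xc: "fx t \<in> carrier G" and yc: "fy t \<in> carrier G" using t hx hy Ssub by auto
    have "h t \<noteq> \<one>"
    proof
      assume "h t = \<one>"
      hence "fx t = \<one> \<otimes> fy t" using inv_solve_right[of "\<one>" "fx t" "fy t"] xc yc unfolding h_def by auto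
      thus False using hne t yc by simp
    qed
    thus "g \<in> carrier G - {\<one>}" using t xc yc unfolding h_def by auto
  qed
  have "card T = (\<Sum>g\<in>carrier G - {\<one>}. card {t\<in>T. h t = g})"
    using sum.group[OF finT _ himg, of "\<lambda>_. 1::nat"] fin by (simp only: card_eq_sum[symmetric]) auto
  also have "carrier G - {\<one>} = S \<union> R" using Ssub unfolding R_def by auto
  also have "(\<Sum>g\<in>S \<union> R. card {t\<in>T. h t = g}) = (\<Sum>g\<in>S. card {t\<in>T. h t = g}) + (\<Sum>g\<in>R. card {t\<in>T. h t = g})"
    by (rule sum.union_disjoint) (use finS finR R_def in auto)
  also have "(\<Sum>g\<in>S. card {t\<in>T. h t = g}) = lam * card S" using lam unfolding h_def by simp
  also have "(\<Sum>g\<in>R. card {t\<in>T. h t = g}) = mu * card R" using mu unfolding h_def R_def by simp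
  finally have cT: "card T = lam * card S + mu * card R" .
  have cG: "card S + card R = order G - 1"
  proof -
    have "card (carrier G - {\<one>}) = order G - 1" unfolding order_def using fin by (simp add: card_Diff_singleton)
    moreover have "carrier G - {\<one>} = S \<union> R" using Ssub unfolding R_def by auto
    moreover have "card (S \<union> R) = card S + card R" by (rule card_Un_disjoint) (use finS finR R_def in auto)
    ultimately show ?thesis by simp
  qed
  have d1: "card S dvd mu * card R" using dv cT by (metis dvd_add_right_iff dvd_triv_right mult.commute)
  have "coprime (card S) (card R)" using gc cG
    by (metis coprime_iff_gcd_eq_1 gcd_add2 add.commute)
  hence "card S dvd mu" using d1 by (simp add: coprime_dvd_mult_left_iff)
  then obtain q where q: "mu = card S * q" by blast
  show ?thesis
  proof (cases "card S = 0")
    case True thus ?thesis using mule by simp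
  next
    case False
    have "q \<le> 1"
    proof (rule ccontr)
      assume "\<not> q \<le> 1"
      hence "card S * 2 \<le> card S * q" by simp
      thus False using mule q False by simp
    qed
    hence "q = 0 \<or> q = 1" by auto
    thus ?thesis using q by auto
  qed
qed
lemma union_card:
  assumes "pdf_family G s k A"
  shows "card (pdf_union s A) = s * k" and "finite (pdf_union s A)"
    and "pdf_union s A \<subseteq> carrier G - {\<one>\<^bsub>G\<^esub>}"
proof -
  have f: "\<forall>i<s. A i \<subseteq> carrier G - {\<one>\<^bsub>G\<^esub>} \<and> finite (A i) \<and> card (A i) = k"
   and d: "\<forall>i<s. \<forall>j<s. i \<noteq> j \<longrightarrow> A i \<inter> A j = {}" using assms unfolding pdf_family_def by auto
  have "card (\<Union>i\<in>{..<s}. A i) = (\<Sum>i\<in>{..<s}. card (A i))"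
    by (rule card_UN_disjoint) (use f d in auto)
  also have "\<dots> = s * k" using f by simp
  finally show "card (pdf_union s A) = s * k" unfolding pdf_union_def by simp
  show "finite (pdf_union s A)" unfolding pdf_union_def using f by auto
  show "pdf_union s A \<subseteq> carrier G - {\<one>\<^bsub>G\<^esub>}" unfolding pdf_union_def using f by auto
qed

lemma offdiag_card:
  assumes "finite B"
  shows "card {(x, y). x \<in> B \<and> y \<in> B \<and> x \<noteq> y} = card B * card B - card B"
proof -
  have e: "{(x, y). x \<in> B \<and> y \<in> B \<and> x \<noteq> y} = B \<times> B - (\<lambda>x. (x, x)) ` B" by auto
  have "card (B \<times> B - (\<lambda>x. (x, x)) ` B) = card (B \<times> B) - card ((\<lambda>x. (x, x)) ` B)"
    by (rule card_Diff_subset) (use assms in auto)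
  also have "card ((\<lambda>x. (x, x)) ` B) = card B" by (rule card_image) (auto simp: inj_on_def)
  finally show ?thesis using e by (simp add: card_cartesian_product)
qed

lemma part_dpdf:
  fixes G :: "('a, 'b) monoid_scheme"
  assumes "group G" and "finite (carrier G)" and "order G = v"
    and "gcd (s * k) (v - 1) = 1"
    and D: "DPDF G v s k lam mu A" and ne: "carrier G - (pdf_union s A \<union> {\<one>\<^bsub>G\<^esub>}) \<noteq> {}"
  shows "mu = 0 \<or> mu = s * k"
proof -
  have pf: "pdf_family G s k A" using D unfolding DPDF_def by auto
  have f: "\<forall>i<s. A i \<subseteq> carrier G - {\<one>\<^bsub>G\<^esub>} \<and> finite (A i) \<and> card (A i) = k"
   and d: "\<forall>i<s. \<forall>j<s. i \<noteq> j \<longrightarrow> A i \<inter> A j = {}" using pf unfolding pdf_family_def by auto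
  define T where "T = (SIGMA i:{..<s}. {(x, y). x \<in> A i \<and> y \<in> A i \<and> x \<noteq> y})"
  have finT: "finite T" unfolding T_def using f
    by (intro finite_SigmaI) (auto intro: finite_subset[of _ "A _ \<times> A _"])
  have fib: "\<And>i. i < s \<Longrightarrow> finite {(x, y). x \<in> A i \<and> y \<in> A i \<and> x \<noteq> y}"
    using f by (auto intro: finite_subset[of _ "A _ \<times> A _"])
  have "card T = (\<Sum>i<s. card {(x, y). x \<in> A i \<and> y \<in> A i \<and> x \<noteq> y})"
    unfolding T_def by (rule card_SigmaI) (use fib in auto)
  also have "\<dots> = (\<Sum>i<s. k * k - k)" by (rule sum.cong) (use f in \<open>simp_all add: offdiag_card\<close>)
  finally have cT: "card T = s * (k * k - k)" by simp
  have "mu = 0 \<or> mu = card (pdf_union s A)"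
  proof (rule key[where T = T and fx = "\<lambda>t. fst (snd t)" and fy = "\<lambda>t. snd (snd t)" and lam = lam])
    show "group G" "finite (carrier G)" "finite T" by (fact assms finT)+
    show "pdf_union s A \<subseteq> carrier G - {\<one>\<^bsub>G\<^esub>}" by (rule union_card[OF pf])
    show "\<forall>t\<in>T. fst (snd t) \<in> carrier G" unfolding T_def using f by auto
    show "\<forall>t\<in>T. snd (snd t) \<in> pdf_union s A" unfolding T_def pdf_union_def by auto
    show "\<forall>t\<in>T. fst (snd t) \<noteq> snd (snd t)" unfolding T_def by auto
    show "inj_on (\<lambda>t. (fst (snd t), snd (snd t))) T"
    proof (rule inj_onI)
      fix a b assume a: "a \<in> T" and b: "b \<in> T" and e: "(fst (snd a), snd (snd a)) = (fst (snd b), snd (snd b))"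
      obtain i x y where ai: "a = (i, x, y)" by (cases a) auto
      obtain i' x' y' where bi: "b = (i', x', y')" by (cases b) auto
      have "x \<in> A i" "i < s" using a ai unfolding T_def by auto
      moreover have "x \<in> A i'" "i' < s" using b bi e ai unfolding T_def by auto
      ultimately have "i = i'" using d by blast
      thus "a = b" using ai bi e by simp
    qed
    show "card (pdf_union s A) dvd card T" using cT union_card[OF pf]
      by (simp add: diff_mult_distrib2 mult.assoc[symmetric])
    have eq: "\<And>g. {t \<in> T. fst (snd t) \<otimes>\<^bsub>G\<^esub> inv\<^bsub>G\<^esub> snd (snd t) = g} = {(i, x, y). i < s \<and> x \<in> A i \<and> y \<in> A i \<and> x \<noteq> y \<and>
                                     x \<otimes>\<^bsub>G\<^esub> inv\<^bsub>G\<^esub> y = g}" unfolding T_def by auto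
    show "\<forall>g\<in>pdf_union s A. card {t \<in> T. fst (snd t) \<otimes>\<^bsub>G\<^esub> inv\<^bsub>G\<^esub> snd (snd t) = g} = lam"
      using D unfolding DPDF_def int_mult_def eq by auto
    show "\<forall>g\<in>carrier G - (pdf_union s A \<union> {\<one>\<^bsub>G\<^esub>}). card {t \<in> T. fst (snd t) \<otimes>\<^bsub>G\<^esub> inv\<^bsub>G\<^esub> snd (snd t) = g} = mu"
      using D unfolding DPDF_def int_mult_def eq by auto
    show "carrier G - (pdf_union s A \<union> {\<one>\<^bsub>G\<^esub>}) \<noteq> {}" by (fact ne)
    show "gcd (card (pdf_union s A)) (order G - 1) = 1" using assms union_card[OF pf] by simp
  qed
  thus ?thesis using union_card[OF pf] by simp
qed

lemma part_epdf:
  fixes G :: "('a, 'b) monoid_scheme"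
  assumes "group G" and "finite (carrier G)" and "order G = v"
    and "gcd (s * k) (v - 1) = 1"
    and D: "EPDF G v s k lam mu A" and ne: "carrier G - (pdf_union s A \<union> {\<one>\<^bsub>G\<^esub>}) \<noteq> {}"
  shows "mu = 0 \<or> mu = s * k"
proof -
  have pf: "pdf_family G s k A" using D unfolding EPDF_def by auto
  have f: "\<forall>i<s. A i \<subseteq> carrier G - {\<one>\<^bsub>G\<^esub>} \<and> finite (A i) \<and> card (A i) = k"
   and d: "\<forall>i<s. \<forall>j<s. i \<noteq> j \<longrightarrow> A i \<inter> A j = {}" using pf unfolding pdf_family_def by auto
  define T where "T = (SIGMA i:{..<s}. SIGMA j:{..<s} - {i}. A i \<times> A j)"
  have finT: "finite T" unfolding T_def using f
    by (intro finite_SigmaI) auto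
  have "card T = (\<Sum>i<s. card (SIGMA j:{..<s} - {i}. A i \<times> A j))"
    unfolding T_def by (rule card_SigmaI) (use f in auto)
  also have "\<dots> = (\<Sum>i<s. (s - 1) * (k * k))"
  proof (rule sum.cong)
    fix i assume i: "i \<in> {..<s}"
    have "card (SIGMA j:{..<s} - {i}. A i \<times> A j) = (\<Sum>j\<in>{..<s} - {i}. card (A i \<times> A j))"
      by (rule card_SigmaI) (use f i in auto)
    also have "\<dots> = (\<Sum>j\<in>{..<s} - {i}. k * k)" by (rule sum.cong) (use f i in \<open>auto simp: card_cartesian_product\<close>)
    finally show "card (SIGMA j:{..<s} - {i}. A i \<times> A j) = (s - 1) * (k * k)" using i by simp
  qed simp
  finally have cT: "card T = s * ((s - 1) * (k * k))" by simp
  have "mu = 0 \<or> mu = card (pdf_union s A)"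
  proof (rule key[where T = T and fx = "\<lambda>t. fst (snd (snd t))" and fy = "\<lambda>t. snd (snd (snd t))" and lam = lam])
    show "group G" "finite (carrier G)" "finite T" by (fact assms finT)+
    show "pdf_union s A \<subseteq> carrier G - {\<one>\<^bsub>G\<^esub>}" by (rule union_card[OF pf])
    show "\<forall>t\<in>T. fst (snd (snd t)) \<in> carrier G" unfolding T_def using f by auto
    show "\<forall>t\<in>T. snd (snd (snd t)) \<in> pdf_union s A" unfolding T_def pdf_union_def by auto
    show "\<forall>t\<in>T. fst (snd (snd t)) \<noteq> snd (snd (snd t))"
    proof
      fix t assume t: "t \<in> T"
      obtain i j x y where ti: "t = (i, j, x, y)" by (cases t) auto
      have "i < s" "j < s" "i \<noteq> j" "x \<in> A i" "y \<in> A j" using t ti unfolding T_def by auto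
      thus "fst (snd (snd t)) \<noteq> snd (snd (snd t))" using d ti by auto
    qed
    show "inj_on (\<lambda>t. (fst (snd (snd t)), snd (snd (snd t)))) T"
    proof (rule inj_onI)
      fix a b assume a: "a \<in> T" and b: "b \<in> T" and e: "(fst (snd (snd a)), snd (snd (snd a))) = (fst (snd (snd b)), snd (snd (snd b)))"
      obtain i j x y where ai: "a = (i, j, x, y)" by (cases a) auto
      obtain i' j' x' y' where bi: "b = (i', j', x', y')" by (cases b) auto
      have "x \<in> A i" "i < s" "y \<in> A j" "j < s" using a ai unfolding T_def by auto
      moreover have "x \<in> A i'" "i' < s" "y \<in> A j'" "j' < s" using b bi e ai unfolding T_def by auto
      ultimately have "i = i'" "j = j'" using d by blast+
      thus "a = b" using ai bi e by simp
    qed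
    show "card (pdf_union s A) dvd card T" using cT union_card[OF pf]
      by (simp add: mult.assoc mult.left_commute)
    have eq: "\<And>g. {t \<in> T. fst (snd (snd t)) \<otimes>\<^bsub>G\<^esub> inv\<^bsub>G\<^esub> snd (snd (snd t)) = g} = {(i, j, x, y). i < s \<and> j < s \<and> i \<noteq> j \<and> x \<in> A i \<and> y \<in> A j \<and>
                                        x \<otimes>\<^bsub>G\<^esub> inv\<^bsub>G\<^esub> y = g}" unfolding T_def by auto
    show "\<forall>g\<in>pdf_union s A. card {t \<in> T. fst (snd (snd t)) \<otimes>\<^bsub>G\<^esub> inv\<^bsub>G\<^esub> snd (snd (snd t)) = g} = lam"
      using D unfolding EPDF_def ext_mult_def eq by auto
    show "\<forall>g\<in>carrier G - (pdf_union s A \<union> {\<one>\<^bsub>G\<^esub>}). card {t \<in> T. fst (snd (snd t)) \<otimes>\<^bsub>G\<^esub> inv\<^bsub>G\<^esub> snd (snd (snd t)) = g} = mu"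
      using D unfolding EPDF_def ext_mult_def eq by auto
    show "carrier G - (pdf_union s A \<union> {\<one>\<^bsub>G\<^esub>}) \<noteq> {}" by (fact ne)
    show "gcd (card (pdf_union s A)) (order G - 1) = 1" using assms union_card[OF pf] by simp
  qed
  thus ?thesis using union_card[OF pf] by simp
qed

theorem mainTheorem10:
  fixes G :: "('a, 'b) monoid_scheme" and v s k lam1 mu1 lam2 mu2 :: nat
    and A1 A2 :: "nat \<Rightarrow> 'a set"
  assumes "group G" and "finite (carrier G)" and "order G = v"
    and "gcd (s * k) (v - 1) = 1"
  shows "(DPDF G v s k lam1 mu1 A1 \<and> carrier G - (pdf_union s A1 \<union> {\<one>\<^bsub>G\<^esub>}) \<noteq> {}
            \<longrightarrow> mu1 = 0 \<or> mu1 = s * k)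
       \<and> (EPDF G v s k lam2 mu2 A2 \<and> carrier G - (pdf_union s A2 \<union> {\<one>\<^bsub>G\<^esub>}) \<noteq> {}
            \<longrightarrow> mu2 = 0 \<or> mu2 = s * k)"
  using part_dpdf[OF assms] part_epdf[OF assms] by blast

end
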